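(* Let $\rho$ be a monotone risk measure on $\mathcal M$. For $\alpha>0$ and $\boldsymbol\theta\in(0,\infty)^n$: (i) $\Lambda\otimes\mathbf P_{\alpha,\boldsymbol\theta}=\mathbf P_{\alpha,\Lambda\boldsymbol\theta}$ for all $\Lambda\in(0,\infty)^{n\times n}$; (ii) $\overline\rho(\mathbf P_{\alpha,\boldsymbol\theta})$ is decreasing in $\alpha$; (iii) $\overline\rho(\mathbf P_{\alpha,\boldsymbol\theta})$ is increasing in each component of $\boldsymbol\theta$.
   Context: Work on an atomless probability space. $\mathcal M$ is the set of cdfs on $\mathbb{R}$. A risk measure $\rho:\mathcal M\to\mathbb{R}$ is monotone if $\rho(F)\le\rho(G)$ whenever $F(x)\ge G(x)$ for all $x$. For $\mathbf F=(F_1,\dots,F_n)$, $\overline\rho(\mathbf F)=\sup\{\rho(H):H\text{ is the cdf of }X_1+\dots+X_n,\ X_i\sim F_i\}$. The Pareto cdf is $P_{\alpha,\theta}(x)=1-(\theta/x)^\alpha$ for $x\ge\theta$ (and $0$ for $x<\theta$), $\alpha,\theta>0$; $\mathbf P_{\alpha,\boldsymbol\theta}=(P_{\alpha,\theta_1},\dots,P_{\alpha,\theta_n})$. For a matrix $\Lambda=(\Lambda_{ij})$ with nonnegative entries, $\Lambda\otimes\mathbf F=(G_1,\dots,G_n)$ is the tuple of cdfs with $G_i^{-1}=\sum_j\Lambda_{ij}F_j^{-1}$, where $F^{-1}(p)=\inf\{x:F(x)\ge p\}$. "Increasing/decreasing" are in the non-strict sense. *)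

theory Defs
  imports "HOL-Probability.Probability"
begin

definition is_cdf :: "(real \<Rightarrow> real) \<Rightarrow> bool" where
  "is_cdf F \<longleftrightarrow> mono F \<and> (\<forall>x. continuous (at_right x) F)
     \<and> (F \<longlongrightarrow> 0) at_bot \<and> (F \<longlongrightarrow> 1) at_top"

definition quantile :: "(real \<Rightarrow> real) \<Rightarrow> real \<Rightarrow> real" where
  "quantile F p = Inf {x. F x \<ge> p}"

definition monotone_rm :: "((real \<Rightarrow> real) \<Rightarrow> real) \<Rightarrow> bool" where
  "monotone_rm \<rho> \<longleftrightarrow> (\<forall>F G. is_cdf F \<longrightarrow> is_cdf G \<longrightarrow> (\<forall>x. F x \<ge> G x) \<longrightarrow> \<rho> F \<le> \<rho> G)"

definition atomless :: "'a measure \<Rightarrow> bool" where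
  "atomless M \<longleftrightarrow> (\<forall>A\<in>sets M. measure M A > 0 \<longrightarrow>
      (\<exists>B\<in>sets M. B \<subseteq> A \<and> 0 < measure M B \<and> measure M B < measure M A))"

definition rv_cdf :: "'a measure \<Rightarrow> ('a \<Rightarrow> real) \<Rightarrow> real \<Rightarrow> real" where
  "rv_cdf M X x = measure M {\<omega>\<in>space M. X \<omega> \<le> x}"

text \<open>Worst-case value: sup of rho over cdfs of X_1+...+X_n with X_i ~ F_i
  (extended reals, since the supremum may be infinite).\<close>
definition rho_bar :: "'a measure \<Rightarrow> ((real \<Rightarrow> real) \<Rightarrow> real) \<Rightarrow> ('n::finite \<Rightarrow> real \<Rightarrow> real) \<Rightarrow> ereal" where
  "rho_bar M \<rho> F = (SUP X \<in> {X :: 'n \<Rightarrow> 'a \<Rightarrow> real.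
        (\<forall>i. X i \<in> borel_measurable M) \<and> (\<forall>i. rv_cdf M (X i) = F i)}.
      ereal (\<rho> (rv_cdf M (\<lambda>\<omega>. \<Sum>i\<in>UNIV. X i \<omega>))))"

definition pareto :: "real \<Rightarrow> real \<Rightarrow> real \<Rightarrow> real" where
  "pareto \<alpha> \<theta> x = (if x \<ge> \<theta> then 1 - (\<theta> / x) powr \<alpha> else 0)"

definition pareto_vec :: "real \<Rightarrow> ('n \<Rightarrow> real) \<Rightarrow> 'n \<Rightarrow> real \<Rightarrow> real" where
  "pareto_vec \<alpha> \<theta> = (\<lambda>i. pareto \<alpha> (\<theta> i))"

definition is_otimes :: "('n::finite \<Rightarrow> 'n \<Rightarrow> real) \<Rightarrow> ('n \<Rightarrow> real \<Rightarrow> real) \<Rightarrow> ('n \<Rightarrow> real \<Rightarrow> real) \<Rightarrow> bool" where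
  "is_otimes \<Lambda> F G \<longleftrightarrow> (\<forall>i. is_cdf (G i) \<and>
     (\<forall>p\<in>{0<..<1}. quantile (G i) p = (\<Sum>j\<in>UNIV. \<Lambda> i j * quantile (F j) p)))"

definition mat_vec :: "('n::finite \<Rightarrow> 'n \<Rightarrow> real) \<Rightarrow> ('n \<Rightarrow> real) \<Rightarrow> 'n \<Rightarrow> real" where
  "mat_vec \<Lambda> \<theta> = (\<lambda>i. \<Sum>j\<in>UNIV. \<Lambda> i j * \<theta> j)"

end

theory Submission
  imports Defs
begin


lemma rv_cdf_eq_cdf:
  assumes "X \<in> borel_measurable M"
  shows "rv_cdf M X = cdf (distr M borel X)"
proof
  fix x
  have "cdf (distr M borel X) x = measure M (X -` {..x} \<inter> space M)"
    unfolding cdf_def by (subst measure_distr) (use assms in auto)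
  also have "X -` {..x} \<inter> space M = {\<omega>\<in>space M. X \<omega> \<le> x}" by auto
  finally show "rv_cdf M X x = cdf (distr M borel X) x" unfolding rv_cdf_def by simp
qed

lemma rv_cdf_is_cdf:
  assumes "prob_space M" "X \<in> borel_measurable M"
  shows "is_cdf (rv_cdf M X)"
proof -
  interpret real_distribution "distr M borel X"
    using prob_space.real_distribution_distr[OF assms(1)] assms(2) by simp
  show ?thesis unfolding is_cdf_def rv_cdf_eq_cdf[OF assms(2)]
    using cdf_nondecreasing cdf_is_right_cont cdf_lim_at_bot cdf_lim_at_top_prob
    by (auto simp: mono_def)
qed

lemma pareto_alt:
  assumes "c > 0"
  shows "pareto a c = (\<lambda>x. 1 - (c / max x c) powr a)"
  using assms by (auto simp: pareto_def fun_eq_iff max_def)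

lemma pareto_is_cdf:
  assumes "c > 0" "a > 0"
  shows "is_cdf (pareto a c)"
proof -
  have cont: "continuous_on UNIV (\<lambda>x. 1 - (c / max x c) powr a)"
    using assms by (intro continuous_intros) (auto simp: max_def)
  have mono: "mono (pareto a c)"
    unfolding pareto_alt[OF assms(1)]
  proof (rule monoI)
    fix x y :: real assume "x \<le> y"
    hence "c / max y c \<le> c / max x c" using assms
      by (intro divide_left_mono) (auto simp: max_def)
    hence "(c / max y c) powr a \<le> (c / max x c) powr a" using assms
      by (intro powr_mono2) auto
    thus "1 - (c / max x c) powr a \<le> 1 - (c / max y c) powr a" by simp
  qed
  have bot: "(pareto a c \<longlongrightarrow> 0) at_bot"
  proof -
    have "eventually (\<lambda>x. 0 = pareto a c x) at_bot"
      unfolding eventually_at_bot_linorder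
      by (rule exI[of _ "c - 1"]) (auto simp: pareto_def)
    thus ?thesis by (rule Lim_transform_eventually[OF tendsto_const])
  qed
  have top: "(pareto a c \<longlongrightarrow> 1) at_top"
  proof -
    have "((\<lambda>x. c / x) \<longlongrightarrow> 0) at_top"
      by (intro tendsto_divide_0[OF tendsto_const] filterlim_at_top_imp_at_infinity filterlim_ident)
    hence "((\<lambda>x. (c / x) powr a) \<longlongrightarrow> 0) at_top"
      using assms
      by (intro tendsto_zero_powrI[where b=a] tendsto_const)
         (auto simp: eventually_at_top_linorder intro!: exI[of _ 1])
    hence l: "((\<lambda>x. 1 - (c / x) powr a) \<longlongrightarrow> 1 - 0) at_top"
      by (intro tendsto_diff tendsto_const)
    have "eventually (\<lambda>x. 1 - (c / x) powr a = pareto a c x) at_top"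
      unfolding eventually_at_top_linorder
      by (rule exI[of _ c]) (auto simp: pareto_def)
    thus ?thesis using Lim_transform_eventually[OF l] by simp
  qed
  show ?thesis unfolding is_cdf_def
    using mono bot top cont unfolding pareto_alt[OF assms(1)]
    by (auto intro: continuous_within_subset[of _ UNIV] simp: continuous_on_eq_continuous_within)
qed


lemma pareto_quantile:
  assumes "c > 0" "a > 0" "0 < p" "p < 1"
  shows "quantile (pareto a c) p = c * (1 - p) powr (-1/a)"
proof -
  define q where "q = c * (1 - p) powr (-1/a)"
  have r: "(1 - p) powr (1/a) > 0" using assms by simp
  have q': "q = c / (1 - p) powr (1/a)"
    unfolding q_def using assms by (simp add: powr_minus_divide divide_inverse powr_minus)
  have r1: "(1 - p) powr (1/a) \<le> 1" using assms by (intro powr_le1) auto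
  have qc: "c \<le> q" unfolding q' using assms r r1 by (simp add: le_divide_eq)
  have qpos: "q > 0" using qc assms by simp
  have "{x. pareto a c x \<ge> p} = {q..}"
  proof (intro set_eqI iffI)
    fix x assume "x \<in> {x. pareto a c x \<ge> p}"
    hence x: "x \<ge> c" "(c / x) powr a \<le> 1 - p"
      using assms by (auto simp: pareto_def split: if_splits)
    have "((c / x) powr a) powr (1/a) \<le> (1 - p) powr (1/a)"
      using x assms by (intro powr_mono2) auto
    hence "c / x \<le> (1 - p) powr (1/a)" using assms x by (simp add: powr_powr)
    hence "c \<le> (1 - p) powr (1/a) * x" using x assms by (simp add: divide_le_eq)
    thus "x \<in> {q..}" unfolding q' using r by (simp add: divide_le_eq mult.commute)
  next
    fix x assume "x \<in> {q..}"
    hence x: "x \<ge> q" by simp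
    hence xc: "x \<ge> c" "x > 0" using qc qpos by auto
    have "c \<le> (1 - p) powr (1/a) * x" using x r unfolding q' by (simp add: divide_le_eq mult.commute)
    hence "c / x \<le> (1 - p) powr (1/a)" using xc by (simp add: divide_le_eq)
    hence "(c / x) powr a \<le> ((1 - p) powr (1/a)) powr a"
      using assms xc by (intro powr_mono2) auto
    hence "(c / x) powr a \<le> 1 - p" using assms by (simp add: powr_powr)
    thus "x \<in> {x. pareto a c x \<ge> p}" using xc by (simp add: pareto_def)
  qed
  thus ?thesis unfolding quantile_def q_def by simp
qed

lemma part1:
  fixes \<theta> :: "'n::finite \<Rightarrow> real"
  assumes "\<forall>i. \<theta> i > 0" "a > 0" "\<forall>i j. \<Lambda> i j > 0"
  shows "is_otimes \<Lambda> (pareto_vec a \<theta>) (pareto_vec a (mat_vec \<Lambda> \<theta>))"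
proof -
  have pos: "mat_vec \<Lambda> \<theta> i > 0" for i
    unfolding mat_vec_def using assms
    by (intro sum_pos) (auto intro: mult_pos_pos)
  show ?thesis unfolding is_otimes_def pareto_vec_def
  proof (intro allI conjI ballI)
    fix i show "is_cdf (pareto a (mat_vec \<Lambda> \<theta> i))" using pos assms pareto_is_cdf by blast
  next
    fix i and p :: real assume p: "p \<in> {0<..<1}"
    have "quantile (pareto a (mat_vec \<Lambda> \<theta> i)) p = mat_vec \<Lambda> \<theta> i * (1 - p) powr (-1/a)"
      using pos p assms by (intro pareto_quantile) auto
    also have "\<dots> = (\<Sum>j\<in>UNIV. \<Lambda> i j * (\<theta> j * (1 - p) powr (-1/a)))"
      unfolding mat_vec_def by (simp add: sum_distrib_right mult.assoc)
    also have "\<dots> = (\<Sum>j\<in>UNIV. \<Lambda> i j * quantile (pareto a (\<theta> j)) p)"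
      using p assms by (intro sum.cong refl) (simp add: pareto_quantile)
    finally show "quantile (pareto a (mat_vec \<Lambda> \<theta> i)) p = (\<Sum>j\<in>UNIV. \<Lambda> i j * quantile (pareto a (\<theta> j)) p)" .
  qed
qed


lemma rho_bar_transfer:
  fixes F G :: "'n::finite \<Rightarrow> real \<Rightarrow> real" and \<phi> :: "'n \<Rightarrow> real \<Rightarrow> real"
  assumes P: "prob_space M" and R: "monotone_rm \<rho>"
    and ge: "\<And>i x. x \<le> \<phi> i x" and meas: "\<And>i. \<phi> i \<in> borel_measurable borel"
    and tr: "\<And>i X. X \<in> borel_measurable M \<Longrightarrow> rv_cdf M X = F i \<Longrightarrow> rv_cdf M (\<lambda>\<omega>. \<phi> i (X \<omega>)) = G i"
  shows "rho_bar M \<rho> F \<le> rho_bar M \<rho> G"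
  unfolding rho_bar_def
proof (rule SUP_mono)
  fix X :: "'n \<Rightarrow> 'a \<Rightarrow> real"
  assume "X \<in> {X. (\<forall>i. X i \<in> borel_measurable M) \<and> (\<forall>i. rv_cdf M (X i) = F i)}"
  hence Xm: "\<And>i. X i \<in> borel_measurable M" and Xc: "\<And>i. rv_cdf M (X i) = F i" by auto
  define Y where "Y = (\<lambda>i \<omega>. \<phi> i (X i \<omega>))"
  have Ym: "\<And>i. Y i \<in> borel_measurable M" unfolding Y_def
    using measurable_compose[OF Xm meas] by (simp add: o_def)
  have Yc: "\<And>i. rv_cdf M (Y i) = G i" unfolding Y_def using tr Xm Xc by blast
  have sXm: "(\<lambda>\<omega>. \<Sum>i\<in>UNIV. X i \<omega>) \<in> borel_measurable M" using Xm by measurable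
  have sYm: "(\<lambda>\<omega>. \<Sum>i\<in>UNIV. Y i \<omega>) \<in> borel_measurable M" using Ym by measurable
  have le: "rv_cdf M (\<lambda>\<omega>. \<Sum>i\<in>UNIV. Y i \<omega>) x \<le> rv_cdf M (\<lambda>\<omega>. \<Sum>i\<in>UNIV. X i \<omega>) x" for x
  proof -
    interpret prob_space M by (rule P)
    have s1: "{\<omega>\<in>space M. (\<Sum>i\<in>UNIV. X i \<omega>) \<le> x} \<in> sets M" using sXm by measurable
    have "\<And>\<omega>. (\<Sum>i\<in>UNIV. X i \<omega>) \<le> (\<Sum>i\<in>UNIV. Y i \<omega>)"
      unfolding Y_def by (intro sum_mono ge)
    hence "{\<omega>\<in>space M. (\<Sum>i\<in>UNIV. Y i \<omega>) \<le> x} \<subseteq> {\<omega>\<in>space M. (\<Sum>i\<in>UNIV. X i \<omega>) \<le> x}"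
      by (auto intro: order_trans)
    thus ?thesis unfolding rv_cdf_def using s1 by (intro finite_measure_mono)
  qed
  have "\<rho> (rv_cdf M (\<lambda>\<omega>. \<Sum>i\<in>UNIV. X i \<omega>)) \<le> \<rho> (rv_cdf M (\<lambda>\<omega>. \<Sum>i\<in>UNIV. Y i \<omega>))"
    using R le rv_cdf_is_cdf[OF P sXm] rv_cdf_is_cdf[OF P sYm] unfolding monotone_rm_def by blast
  moreover have "Y \<in> {X. (\<forall>i. X i \<in> borel_measurable M) \<and> (\<forall>i. rv_cdf M (X i) = G i)}"
    using Ym Yc by auto
  ultimately show "\<exists>Y\<in>{X. (\<forall>i. X i \<in> borel_measurable M) \<and> (\<forall>i. rv_cdf M (X i) = G i)}.
     ereal (\<rho> (rv_cdf M (\<lambda>\<omega>. \<Sum>i\<in>UNIV. X i \<omega>))) \<le> ereal (\<rho> (rv_cdf M (\<lambda>\<omega>. \<Sum>i\<in>UNIV. Y i \<omega>)))"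
    by auto
qed

lemma cdf_transform:
  assumes low: "\<And>x. c' \<le> \<phi> x"
    and eq: "\<And>y x. y \<ge> c' \<Longrightarrow> \<phi> x \<le> y \<longleftrightarrow> x \<le> \<psi> y"
  shows "rv_cdf M (\<lambda>\<omega>. \<phi> (X \<omega>)) y = (if y < c' then 0 else rv_cdf M X (\<psi> y))"
proof (cases "y < c'")
  case True
  hence e: "{\<omega>\<in>space M. \<phi> (X \<omega>) \<le> y} = {}" using low by (auto simp: not_le intro: order.strict_trans2[of y c'])
  show ?thesis using True unfolding rv_cdf_def e by simp
next
  case False
  hence e: "{\<omega>\<in>space M. \<phi> (X \<omega>) \<le> y} = {\<omega>\<in>space M. X \<omega> \<le> \<psi> y}" using eq by auto
  show ?thesis using False unfolding rv_cdf_def e by simp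
qed


lemma powr_le_iff_root:
  fixes u v b :: real
  assumes "u > 0" "v > 0" "b > 0"
  shows "u powr b \<le> v \<longleftrightarrow> u \<le> v powr (1/b)"
proof
  assume "u powr b \<le> v"
  hence "(u powr b) powr (1/b) \<le> v powr (1/b)" using assms by (intro powr_mono2) auto
  thus "u \<le> v powr (1/b)" using assms by (simp add: powr_powr)
next
  assume "u \<le> v powr (1/b)"
  hence "u powr b \<le> (v powr (1/b)) powr b" using assms by (intro powr_mono2) auto
  thus "u powr b \<le> v" using assms by (simp add: powr_powr)
qed

lemma alpha_transform:
  assumes th: "\<theta> > 0" and a: "0 < a1" "a1 \<le> a2" and X: "rv_cdf M X = pareto a2 \<theta>"
  shows "rv_cdf M (\<lambda>\<omega>. \<theta> * (max (X \<omega>) \<theta> / \<theta>) powr (a2/a1)) = pareto a1 \<theta>"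
proof
  fix y
  define \<psi> where "\<psi> y = \<theta> * (y / \<theta>) powr (a1/a2)" for y
  have low: "\<theta> \<le> \<theta> * (max x \<theta> / \<theta>) powr (a2/a1)" for x
  proof -
    have "1 \<le> max x \<theta> / \<theta>" using th by (simp add: le_divide_eq)
    hence "1 \<le> (max x \<theta> / \<theta>) powr (a2/a1)" using a by (intro ge_one_powr_ge_zero) auto
    thus ?thesis using th by simp
  qed
  have psi_ge: "\<theta> \<le> \<psi> y" if "y \<ge> \<theta>" for y
  proof -
    have "1 \<le> y / \<theta>" using th that by (simp add: le_divide_eq)
    hence "1 \<le> (y / \<theta>) powr (a1/a2)" using a by (intro ge_one_powr_ge_zero) auto
    thus ?thesis using th unfolding \<psi>_def by simp
  qed
  have eq: "\<theta> * (max x \<theta> / \<theta>) powr (a2/a1) \<le> y \<longleftrightarrow> x \<le> \<psi> y" if y: "y \<ge> \<theta>" for x y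
  proof -
    have "\<theta> * (max x \<theta> / \<theta>) powr (a2/a1) \<le> y \<longleftrightarrow> (max x \<theta> / \<theta>) powr (a2/a1) \<le> y / \<theta>"
      using th by (simp add: le_divide_eq mult.commute)
    also have "\<dots> \<longleftrightarrow> max x \<theta> / \<theta> \<le> (y / \<theta>) powr (1 / (a2/a1))"
      using th y a by (intro powr_le_iff_root) auto
    also have "\<dots> \<longleftrightarrow> max x \<theta> \<le> \<psi> y"
      using th unfolding \<psi>_def by (simp add: divide_le_eq mult.commute)
    also have "\<dots> \<longleftrightarrow> x \<le> \<psi> y" using psi_ge[OF y] by simp
    finally show ?thesis .
  qed
  have "rv_cdf M (\<lambda>\<omega>. \<theta> * (max (X \<omega>) \<theta> / \<theta>) powr (a2/a1)) y
      = (if y < \<theta> then 0 else rv_cdf M X (\<psi> y))"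
    by (rule cdf_transform[where c'=\<theta>]) (use low eq in auto)
  also have "\<dots> = pareto a1 \<theta> y"
  proof (cases "y < \<theta>")
    case True thus ?thesis by (simp add: pareto_def)
  next
    case False
    hence y: "y \<ge> \<theta>" "y > 0" using th by auto
    have "(\<theta> / \<psi> y) powr a2 = (\<theta> / y) powr a1"
    proof -
      have "\<theta> / \<psi> y = 1 / (y / \<theta>) powr (a1/a2)" using th unfolding \<psi>_def by simp
      hence "(\<theta> / \<psi> y) powr a2 = 1 / ((y / \<theta>) powr (a1/a2)) powr a2"
        using th y by (simp add: powr_divide)
      also have "\<dots> = 1 / (y / \<theta>) powr a1" using a by (simp add: powr_powr)
      also have "\<dots> = (\<theta> / y) powr a1" using th y by (simp add: powr_divide)
      finally show ?thesis .
    qed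
    thus ?thesis using False psi_ge[OF y(1)] X by (simp add: pareto_def)
  qed
  finally show "rv_cdf M (\<lambda>\<omega>. \<theta> * (max (X \<omega>) \<theta> / \<theta>) powr (a2/a1)) y = pareto a1 \<theta> y" .
qed

lemma alpha_ge:
  fixes x \<theta> a1 a2 :: real
  assumes th: "\<theta> > 0" and a: "0 < a1" "a1 \<le> a2"
  shows "x \<le> \<theta> * (max x \<theta> / \<theta>) powr (a2/a1)"
proof (cases "x \<le> \<theta>")
  case True
  have "1 \<le> max x \<theta> / \<theta>" using th by (simp add: le_divide_eq)
  hence "1 \<le> (max x \<theta> / \<theta>) powr (a2/a1)" using a by (intro ge_one_powr_ge_zero) auto
  thus ?thesis using th True by (smt (verit) mult_le_cancel_left1)
next
  case False
  hence "1 \<le> x / \<theta>" using th by (simp add: le_divide_eq)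
  hence "(x / \<theta>) powr 1 \<le> (x / \<theta>) powr (a2/a1)" using a by (intro powr_mono) auto
  thus ?thesis using th False by (simp add: max_def divide_le_eq mult.commute)
qed

lemma theta_transform:
  assumes th: "\<theta> > 0" "\<theta> \<le> t" and X: "rv_cdf M X = pareto a \<theta>"
  shows "rv_cdf M (\<lambda>\<omega>. t / \<theta> * max (X \<omega>) \<theta>) = pareto a t"
proof
  fix y
  have low: "t \<le> t / \<theta> * max x \<theta>" for x
    using th by (simp add: le_divide_eq mult.commute mult_left_mono)
  have eq: "t / \<theta> * max x \<theta> \<le> y \<longleftrightarrow> x \<le> y * \<theta> / t" if y: "y \<ge> t" for x y
  proof -
    have tp: "t > 0" using th by simp
    have "y * \<theta> / t \<ge> \<theta>" using th y tp by (simp add: le_divide_eq mult_left_mono)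
    moreover have "t / \<theta> * m \<le> y \<longleftrightarrow> m \<le> y * \<theta> / t" for m
      using th tp by (simp add: field_simps)
    ultimately show ?thesis by auto
  qed
  have "rv_cdf M (\<lambda>\<omega>. t / \<theta> * max (X \<omega>) \<theta>) y = (if y < t then 0 else rv_cdf M X (y * \<theta> / t))"
    by (rule cdf_transform[where c'=t]) (use low eq in auto)
  also have "\<dots> = pareto a t y"
  proof (cases "y < t")
    case True thus ?thesis by (simp add: pareto_def)
  next
    case False
    hence "y * \<theta> / t \<ge> \<theta>" "\<theta> / (y * \<theta> / t) = t / y" using th by (auto simp: le_divide_eq mult_left_mono)
    thus ?thesis using False X by (simp add: pareto_def)
  qed
  finally show "rv_cdf M (\<lambda>\<omega>. t / \<theta> * max (X \<omega>) \<theta>) y = pareto a t y" .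
qed


lemma theta_ge:
  fixes x \<theta> t :: real
  assumes "\<theta> > 0" "\<theta> \<le> t"
  shows "x \<le> t / \<theta> * max x \<theta>"
proof -
  have "max x \<theta> \<le> t / \<theta> * max x \<theta>"
    using assms by (intro mult_le_cancel_right1[THEN iffD2]) (auto simp: le_divide_eq max_def)
  thus ?thesis by linarith
qed

theorem proposition14:
  fixes M :: "'a measure" and \<rho> :: "(real \<Rightarrow> real) \<Rightarrow> real"
    and \<theta> :: "'n::finite \<Rightarrow> real"
  assumes "prob_space M" and "atomless M"
    and "monotone_rm \<rho>"
    and "\<forall>i. \<theta> i > 0"
  shows "(\<forall>\<alpha> > 0. \<forall>\<Lambda> :: 'n \<Rightarrow> 'n \<Rightarrow> real. (\<forall>i j. \<Lambda> i j > 0) \<longrightarrow>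
            is_otimes \<Lambda> (pareto_vec \<alpha> \<theta>) (pareto_vec \<alpha> (mat_vec \<Lambda> \<theta>)))
       \<and> (\<forall>\<alpha>1 \<alpha>2. 0 < \<alpha>1 \<longrightarrow> \<alpha>1 \<le> \<alpha>2 \<longrightarrow>
            rho_bar M \<rho> (pareto_vec \<alpha>2 \<theta>) \<le> rho_bar M \<rho> (pareto_vec \<alpha>1 \<theta>))
       \<and> (\<forall>\<alpha> > 0. \<forall>i t. \<theta> i \<le> t \<longrightarrow>
            rho_bar M \<rho> (pareto_vec \<alpha> \<theta>) \<le> rho_bar M \<rho> (pareto_vec \<alpha> (\<theta>(i := t))))"
proof (intro conjI allI impI)
  fix \<alpha> :: real and \<Lambda> :: "'n \<Rightarrow> 'n \<Rightarrow> real"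
  assume "\<alpha> > 0" "\<forall>i j. \<Lambda> i j > 0"
  thus "is_otimes \<Lambda> (pareto_vec \<alpha> \<theta>) (pareto_vec \<alpha> (mat_vec \<Lambda> \<theta>))"
    using part1 assms(4) by blast
next
  fix a1 a2 :: real assume a: "0 < a1" "a1 \<le> a2"
  show "rho_bar M \<rho> (pareto_vec a2 \<theta>) \<le> rho_bar M \<rho> (pareto_vec a1 \<theta>)"
  proof (rule rho_bar_transfer[OF assms(1) assms(3),
        where \<phi> = "\<lambda>i x. \<theta> i * (max x (\<theta> i) / \<theta> i) powr (a2/a1)"])
    fix i x show "x \<le> \<theta> i * (max x (\<theta> i) / \<theta> i) powr (a2/a1)"
      using alpha_ge assms(4) a by blast
  next
    fix i show "(\<lambda>x. \<theta> i * (max x (\<theta> i) / \<theta> i) powr (a2/a1)) \<in> borel_measurable borel"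
      by measurable
  next
    fix i X assume "X \<in> borel_measurable M" "rv_cdf M X = pareto_vec a2 \<theta> i"
    thus "rv_cdf M (\<lambda>\<omega>. \<theta> i * (max (X \<omega>) (\<theta> i) / \<theta> i) powr (a2/a1)) = pareto_vec a1 \<theta> i"
      using alpha_transform assms(4) a unfolding pareto_vec_def by blast
  qed
next
  fix \<alpha> :: real and i t assume "\<alpha> > 0" "\<theta> i \<le> t"
  note it = this
  show "rho_bar M \<rho> (pareto_vec \<alpha> \<theta>) \<le> rho_bar M \<rho> (pareto_vec \<alpha> (\<theta>(i := t)))"
  proof (rule rho_bar_transfer[OF assms(1) assms(3),
        where \<phi> = "\<lambda>j x. if j = i then t / \<theta> i * max x (\<theta> i) else x"])
    fix j x show "x \<le> (if j = i then t / \<theta> i * max x (\<theta> i) else x)"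
      using theta_ge assms(4) it by auto
  next
    fix j show "(\<lambda>x. if j = i then t / \<theta> i * max x (\<theta> i) else x) \<in> borel_measurable borel"
      by (cases "j = i") simp_all
  next
    fix j X assume X: "X \<in> borel_measurable M" "rv_cdf M X = pareto_vec \<alpha> \<theta> j"
    show "rv_cdf M (\<lambda>\<omega>. if j = i then t / \<theta> i * max (X \<omega>) (\<theta> i) else X \<omega>) = pareto_vec \<alpha> (\<theta>(i := t)) j"
    proof (cases "j = i")
      case True
      thus ?thesis using theta_transform[of "\<theta> i" t M X \<alpha>] X assms(4) it
        unfolding pareto_vec_def by simp
    next
      case False
      thus ?thesis using X unfolding pareto_vec_def by simp
    qed
  qed
qed

end
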